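(* Let $k\ge r\ge3$ and $m\ge0$ be integers, and let $\pi\in\mathbb{C}_{<}(k,r|p,t)$ for some integers $p,t\ge0$ with $p+t=m$. Then there do not exist integers $p',t'\ge0$ with $p'\ne p$, $t'\ne t$, $p'+t'=m$ and $\pi\in\mathbb{C}_{<}(k,r|p',t')$.
   Context: A partition $\pi=(\pi_1,\dots,\pi_\ell)$ is a finite non-increasing sequence of positive integers; "$a$ occurs in $\pi$" means $a=\pi_i$ for some $i$. Göllnitz–Gordon marking: $GG(\pi)$ assigns a positive integer (mark) to each part, processing the parts from smallest to largest; $\pi_i$ receives the smallest positive integer different from the marks of all parts $\pi_g$ with $g>i$ and $\pi_i-\pi_g\le 2$, where $\pi_i-\pi_g<2$ is required when $\pi_i$ is odd. An "$r$-marked part $a$" is a part equal to $a$ with mark $r$. $N_i(\pi)$ is the number of parts with mark $i$; $\pi^{(i)}_1\ge\dots\ge\pi^{(i)}_{N_i(\pi)}$ are the parts with mark $i$, with $\pi^{(i)}_0=+\infty$, $\pi^{(i)}_{N_i(\pi)+1}=-\infty$. $\mathbb{C}(k,r)$: partitions with (i) no odd part repeated; (ii) $\pi_i\ge\pi_{i+k-1}+2$ for $1\le i\le\ell-k+1$, strict if $\pi_i$ even; (iii) at most $r-1$ parts $\le 2$. Starting types: for $\pi\in\mathbb{C}(k,r)$ with $N_2=N_2(\pi)\ge1$, let $l$ be the largest integer in $\{0,\dots,N_2\}$ such that no odd part of $\pi$ is $\ge\pi^{(2)}_l$; for $l<i\le N_2$, $\pi^{(2)}_i$ has type $s_{-1}$.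 For $b=1,\dots,l$ in increasing order, type and auxiliary $\sigma_b$: for $b=1$: Case 1: 1-marked part $\pi^{(2)}_1-1$ exists and $\pi^{(2)}_1+2$ does not occur: type $s_0$, $\sigma_1=\pi^{(2)}_1-1$; Case 2: 1-marked $\pi^{(2)}_1-2$ exists and $\pi^{(2)}_1+2$ does not occur: type $s_1$, $\sigma_1=\pi^{(2)}_1-2$; Case 3: 1-marked $\pi^{(2)}_1+2$ exists: type $s_2$, $\sigma_1=\pi^{(2)}_1+2$; Case 4: 1-marked $\pi^{(2)}_1$ exists: type $s_3$, $\sigma_1=\pi^{(2)}_1$. For $2\le b\le l$: Case 1: 1-marked $\pi^{(2)}_b-1$ exists and, if a 1-marked $\pi^{(2)}_b+2$ exists, $\sigma_{b-1}=\pi^{(2)}_b+2$: type $s_0$, $\sigma_b=\pi^{(2)}_b-1$; Case 2: same with $\pi^{(2)}_b-2$: type $s_1$, $\sigma_b=\pi^{(2)}_b-2$; Case 3: 1-marked $\pi^{(2)}_b+2$ exists and $\sigma_{b-1}\ne\pi^{(2)}_b+2$: type $s_2$, $\sigma_b=\pi^{(2)}_b+2$; Case 4: 1-marked $\pi^{(2)}_b$ exists: type $s_3$, $\sigma_b=\pi^{(2)}_b$. $\mathbb{C}_{<}(k,r|p,t)$: the set of $\pi\in\mathbb{C}(k,r)$ such that (1) no odd part is $\ge 2t+1$; (2) $\pi^{(2)}_{p+1}<2t+1<\pi^{(2)}_p$ (in particular $p\le N_2(\pi)$); (3) if $\pi^{(2)}_p=2t+2$ then it is of starting type $s_2$ or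 $s_3$; (4) if $\pi^{(2)}_{p+1}=2t$ then it is of starting type $s_0$ or $s_1$. *)

theory Defs
  imports Main "HOL-Library.Extended_Real"
begin

text \<open>A partition is a list of positive naturals in non-increasing order;
  element i (0-based) of the list is the part pi_(i+1).\<close>

definition is_partition :: "nat list \<Rightarrow> bool" where
  "is_partition xs \<longleftrightarrow> sorted_wrt (\<ge>) xs \<and> (\<forall>x\<in>set xs. 0 < x)"

definition occurs :: "nat \<Rightarrow> nat list \<Rightarrow> bool" where
  "occurs a xs \<longleftrightarrow> a \<in> set xs"

text \<open>Goellnitz-Gordon marking.  gg xs ! i is the mark of xs ! i.  Marks of a part
  only depend on the (smaller) parts after it, so we recurse on the tail.\<close>

fun gg :: "nat list \<Rightarrow> nat list" where
  "gg [] = []"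
| "gg (x # xs) =
     (let ms = gg xs in
       (LEAST r::nat. 0 < r \<and>
          r \<notin> {ms ! j | j. j < length xs \<and> x - xs ! j \<le> 2
                              \<and> (odd x \<longrightarrow> x - xs ! j < 2)}) # ms)"

definition marked :: "nat list \<Rightarrow> nat \<Rightarrow> nat \<Rightarrow> bool" where
  "marked xs r a \<longleftrightarrow> (\<exists>j < length xs. xs ! j = a \<and> gg xs ! j = r)"

definition marked_parts :: "nat list \<Rightarrow> nat \<Rightarrow> nat list" where
  "marked_parts xs i = [xs ! j. j \<leftarrow> [0..<length xs], gg xs ! j = i]"

definition N :: "nat list \<Rightarrow> nat \<Rightarrow> nat" where
  "N xs i = length (marked_parts xs i)"

definition mpart :: "nat list \<Rightarrow> nat \<Rightarrow> nat \<Rightarrow> ereal" where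
  "mpart xs i j =
     (if j = 0 then \<infinity>
      else if j \<le> N xs i then ereal (real (marked_parts xs i ! (j - 1)))
      else -\<infinity>)"

definition C :: "nat \<Rightarrow> nat \<Rightarrow> nat list set" where
  "C k r = {xs. is_partition xs
     \<and> (\<forall>i j. i < j \<and> j < length xs \<and> xs ! i = xs ! j \<longrightarrow> even (xs ! i))
     \<and> (\<forall>i. i + k - 1 < length xs \<longrightarrow>
           xs ! (i + k - 1) + 2 \<le> xs ! i
           \<and> (even (xs ! i) \<longrightarrow> xs ! (i + k - 1) + 2 < xs ! i))
     \<and> length (filter (\<lambda>x. x \<le> 2) xs) \<le> r - 1}"

datatype stype = Sm1 | S0 | S1 | S2 | S3

definition lidx :: "nat list \<Rightarrow> nat" where
  "lidx xs = (GREATEST l. l \<le> N xs 2 \<and>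
                 (\<forall>x\<in>set xs. odd x \<longrightarrow> ereal (real x) < mpart xs 2 l))"

text \<open>st_aux xs b = Some (type, sigma_b) for 1 <= b (meaningful for b <= l);
  the cases are tried in the order 1,2,3,4; None if no case applies.\<close>
fun st_aux :: "nat list \<Rightarrow> nat \<Rightarrow> (stype \<times> nat) option" where
  "st_aux xs 0 = None"
| "st_aux xs (Suc b) =
    (let v = marked_parts xs 2 ! b;
         prev = st_aux xs b;
         one = marked xs 1
     in if b = 0 then
          (if one (v - 1) \<and> 1 \<le> v \<and> \<not> occurs (v + 2) xs then Some (S0, v - 1)
           else if one (v - 2) \<and> 2 \<le> v \<and> \<not> occurs (v + 2) xs then Some (S1, v - 2)
           else if one (v + 2) then Some (S2, v + 2)
           else if one v then Some (S3, v)
           else None)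
        else (case prev of None \<Rightarrow> None | Some (_, \<sigma>) \<Rightarrow>
          (if one (v - 1) \<and> 1 \<le> v \<and> (one (v + 2) \<longrightarrow> \<sigma> = v + 2) then Some (S0, v - 1)
           else if one (v - 2) \<and> 2 \<le> v \<and> (one (v + 2) \<longrightarrow> \<sigma> = v + 2) then Some (S1, v - 2)
           else if one (v + 2) \<and> \<sigma> \<noteq> v + 2 then Some (S2, v + 2)
           else if one v then Some (S3, v)
           else None)))"

definition start_type :: "nat list \<Rightarrow> nat \<Rightarrow> stype option" where
  "start_type xs b = (if lidx xs < b then Some Sm1 else map_option fst (st_aux xs b))"

definition Cless :: "nat \<Rightarrow> nat \<Rightarrow> nat \<Rightarrow> nat \<Rightarrow> nat list set" where
  "Cless k r p t = {xs. xs \<in> C k r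
     \<and> (\<forall>x\<in>set xs. odd x \<longrightarrow> x < 2 * t + 1)
     \<and> p \<le> N xs 2
     \<and> mpart xs 2 (p + 1) < ereal (real (2 * t + 1))
     \<and> ereal (real (2 * t + 1)) < mpart xs 2 p
     \<and> (mpart xs 2 p = ereal (real (2 * t + 2)) \<longrightarrow>
          start_type xs p \<in> {Some S2, Some S3})
     \<and> (mpart xs 2 (p + 1) = ereal (real (2 * t)) \<longrightarrow>
          start_type xs (p + 1) \<in> {Some S0, Some S1})}"

end

theory Submission
  imports Defs
begin

lemma gg_length: "length (gg xs) = length xs"
  by (induction xs) (auto simp: Let_def)

lemma gg_sep:
  assumes "a < b" "b < length xs" "gg xs ! a = gg xs ! b"
  shows "\<not> (xs!a - xs!b \<le> 2 \<and> (odd (xs!a) \<longrightarrow> xs!a - xs!b < 2))"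
  using assms
proof (induction xs arbitrary: a b)
  case Nil then show ?case by simp
next
  case (Cons x xs)
  define S where "S = {gg xs ! j | j. j < length xs \<and> x - xs ! j \<le> 2
                              \<and> (odd x \<longrightarrow> x - xs ! j < 2)}"
  have fin: "finite S" unfolding S_def by simp
  have ex: "\<exists>r::nat. 0 < r \<and> r \<notin> S"
  proof -
    have "finite (S \<union> {0})" using fin by simp
    then obtain r where "r \<notin> S \<union> {0}" using ex_new_if_finite[OF infinite_UNIV_nat] by blast
    then show ?thesis by auto
  qed
  have g0: "gg (x#xs) ! 0 = (LEAST r::nat. 0 < r \<and> r \<notin> S)"
    by (simp add: S_def Let_def)
  have L: "(LEAST r::nat. 0 < r \<and> r \<notin> S) \<notin> S"
    using LeastI_ex[OF ex] by blast
  show ?case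
  proof (cases a)
    case 0
    obtain j where b: "b = Suc j" using Cons.prems(1) 0 by (cases b) auto
    have "gg (x#xs) ! b = gg xs ! j" using b by (simp add: Let_def)
    then have "gg xs ! j \<notin> S" using Cons.prems(3) g0 L 0 by simp
    moreover have "j < length xs" using b Cons.prems(2) by simp
    ultimately show ?thesis using 0 b unfolding S_def by auto
  next
    case (Suc a')
    obtain j where b: "b = Suc j" using Cons.prems(1) Suc by (cases b) auto
    have "gg xs ! a' = gg xs ! j" using Cons.prems(3) Suc b by (simp add: Let_def)
    then show ?thesis using Cons.IH[of a' j] Suc b Cons.prems by simp
  qed
qed

lemma lc_eq: "concat (map (\<lambda>j. if P j then [f j] else []) L) = map f (filter P L)"
  by (induction L) auto

lemma mp_eq: "marked_parts xs i = map (nth xs) (filter (\<lambda>j. gg xs ! j = i) [0..<length xs])"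
  unfolding marked_parts_def by (simp add: lc_eq)

lemma mp_idx:
  assumes "i < i'" "i' < length (marked_parts xs c)"
  shows "\<exists>a b. a < b \<and> b < length xs \<and> gg xs ! a = c \<and> gg xs ! b = c
     \<and> marked_parts xs c ! i = xs ! a \<and> marked_parts xs c ! i' = xs ! b"
proof -
  define L where "L = filter (\<lambda>j. gg xs ! j = c) [0..<length xs]"
  have ml: "marked_parts xs c = map (nth xs) L" using mp_eq L_def by simp
  have s: "sorted_wrt (<) L" unfolding L_def
    using sorted_wrt_filter sorted_wrt_upt by blast
  have li: "i' < length L" using assms ml by simp
  have lt: "L!i < L!i'" using s assms li sorted_wrt_nth_less by blast
  have m1: "L!i \<in> set L" "L!i' \<in> set L" using li assms by auto
  have "L!i < length xs" "L!i' < length xs" "gg xs ! (L!i) = c" "gg xs ! (L!i') = c"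
    using m1 unfolding L_def by auto
  then show ?thesis using lt li assms ml
    by (intro exI[of _ "L!i"] exI[of _ "L!i'"]) auto
qed

lemma mp_step:
  assumes P: "is_partition xs" and "i + 1 < length (marked_parts xs c)"
  shows "marked_parts xs c ! (i+1) + 2 \<le> marked_parts xs c ! i
    \<and> (even (marked_parts xs c ! i) \<longrightarrow> marked_parts xs c ! (i+1) + 3 \<le> marked_parts xs c ! i)"
proof -
  obtain a b where ab: "a < b" "b < length xs" "gg xs ! a = c" "gg xs ! b = c"
     "marked_parts xs c ! i = xs ! a" "marked_parts xs c ! (i+1) = xs ! b"
    using mp_idx[of i "i+1" xs c] assms by auto
  have "xs!b \<le> xs!a" using P ab unfolding is_partition_def
    by (simp add: sorted_wrt_iff_nth_less)
  moreover have "\<not> (xs!a - xs!b \<le> 2 \<and> (odd (xs!a) \<longrightarrow> xs!a - xs!b < 2))"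
    using gg_sep[of a b xs] ab by simp
  ultimately show ?thesis using ab by presburger
qed

lemma mp_chain:
  assumes P: "is_partition xs" and "i + d < length (marked_parts xs c)"
  shows "marked_parts xs c ! (i+d) + 2*d \<le> marked_parts xs c ! i"
  using assms(2)
proof (induction d)
  case 0 then show ?case by simp
next
  case (Suc d)
  then have "marked_parts xs c ! (i+d) + 2*d \<le> marked_parts xs c ! i" by simp
  moreover have "marked_parts xs c ! (i+d+1) + 2 \<le> marked_parts xs c ! (i+d)"
    using mp_step[OF P, of "i+d" c] Suc.prems by simp
  ultimately show ?case by simp
qed

lemma mpart_val: "1 \<le> j \<Longrightarrow> j \<le> N xs i \<Longrightarrow> mpart xs i j = ereal (real (marked_parts xs i ! (j - 1)))"
  unfolding mpart_def by simp

lemma main: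
  assumes A: "xs \<in> Cless k r p t" and B: "xs \<in> Cless k r p' t'"
    and lt: "p < p'" and sm: "p + t = p' + t'"
  shows False
proof -
  define ms where "ms = marked_parts xs 2"
  have P: "is_partition xs" using A unfolding Cless_def C_def by auto
  have pN: "p' \<le> length ms" using B unfolding Cless_def N_def ms_def by auto
  have v1: "mpart xs 2 (p+1) = ereal (real (ms ! p))"
    using mpart_val[of "p+1" xs 2] pN lt unfolding ms_def N_def by simp
  have v2: "mpart xs 2 p' = ereal (real (ms ! (p'-1)))"
    using mpart_val[of "p'" xs 2] pN lt unfolding ms_def N_def by simp
  have h1: "ms ! p < 2*t+1" using A v1 unfolding Cless_def by auto
  have h2: "2*t'+1 < ms ! (p'-1)" using B v2 unfolding Cless_def by auto
  show False
  proof (cases "p' = p + 1")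
    case True
    then have e: "ms ! p = 2*t" "t = t'+1" using h1 h2 sm by auto
    have "start_type xs (p+1) \<in> {Some S0, Some S1}"
      using A v1 e unfolding Cless_def by auto
    moreover have "start_type xs p' \<in> {Some S2, Some S3}"
      using B v2 e True unfolding Cless_def by auto
    ultimately show False using True by auto
  next
    case False
    define d where "d = p' - 1 - p"
    have d1: "d \<ge> 1" "p' - 1 = p + d" using False lt d_def by auto
    have c1: "ms ! (p+d) + 2*d \<le> ms ! p"
      using mp_chain[OF P, of p d 2] d1 pN lt unfolding ms_def by simp
    have c2: "ms ! (p+1+(d-1)) + 2*(d-1) \<le> ms ! (p+1)"
      using mp_chain[OF P, of "p+1" "d-1" 2] d1 pN lt unfolding ms_def by simp
    have c3: "ms ! (p+1) + 2 \<le> ms ! p \<and> (even (ms!p) \<longrightarrow> ms ! (p+1) + 3 \<le> ms ! p)"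
      using mp_step[OF P, of p 2] d1 pN lt unfolding ms_def by simp
    have tt: "t = t' + d + 1" using sm d1 lt by simp
    have "ms ! p = 2*t" using c1 h1 h2 d1 tt by simp
    moreover have "p+1+(d-1) = p+d" using d1 by simp
    ultimately show False using c2 c3 h2 d1 tt by (simp, arith)
  qed
qed

theorem proposition5p2:
  fixes k r m p t :: nat and xs :: "nat list"
  assumes "r \<le> k" and "3 \<le> r"
    and "p + t = m"
    and "xs \<in> Cless k r p t"
  shows "\<not> (\<exists>p' t' :: nat. p' \<noteq> p \<and> t' \<noteq> t \<and> p' + t' = m \<and> xs \<in> Cless k r p' t')"
proof
  assume "\<exists>p' t' :: nat. p' \<noteq> p \<and> t' \<noteq> t \<and> p' + t' = m \<and> xs \<in> Cless k r p' t'"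
  then obtain p' t' where h: "p' \<noteq> p" "p' + t' = m" "xs \<in> Cless k r p' t'" by blast
  show False
  proof (cases "p < p'")
    case True then show ?thesis using main[OF assms(4) h(3)] h assms(3) by simp
  next
    case False then have "p' < p" using h by simp
    then show ?thesis using main[OF h(3) assms(4)] h assms(3) by simp
  qed
qed

end
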